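(* Under the setting of the epoch-based policy $\pi_\epsilon$ described in the context (with i.i.d. arrival vectors of mean $\boldsymbol\lambda$ and $0<\epsilon<1-\hat T(\boldsymbol\lambda)$), let $T_m=t_m-t_{m-1}$ be the length of the $m$-th epoch and $S_m$ the system state at time $t_m$; $\{(T_m,S_m)\}_{m\ge1}$ is a homogeneous Markov chain. If $\hat T(\boldsymbol\lambda)<1$, then there exist constants $U>0$ and $\delta\in(0,1]$ such that for all states $(\tau,s)$, $$\mathbb{E}[T_2\mid T_1=\tau,S_1=s]\le U+(1-\delta)\tau,$$ and for every $\delta_1>0$ the set of states $(\tau,s)$ with $U/\tau>\delta_1$ is finite.
   Context: System model with $n$ inputs, finite state set $\mathcal{S}$, controls/actions, admissible policy class $\Pi$ satisfying Features F1 (history known), F2 (restart allowed when internal queues are empty), F3 (any sub-vector of input packets may be processed ignoring the rest), and Statistical Assumptions SA1 ($\bar T^*_s(\boldsymbol k)<\infty$), SA2 (statistics known), SA3 (markings i.i.d. per input, independent across inputs), SA4 (next state and slot outcome depend on the past only through current state and control), SA5 (a policy $\pi_h$ evacuates any $\boldsymbol k$ packets present in the system in expected time $\le C_1\sum_ik_i+C_0$), SA6 ($\bar T_s^*(\boldsymbol k)-\bar T_s^*(\boldsymbol k+\boldsymbol e_i)\le D_0<\infty$). Arrival vectors $\boldsymbol A(t)$, $t\ge1$, are i.i.d. with mean $\boldsymbol\lambda$. Evacuation times: $T_s^\pi(\boldsymbol k)$ is the time to make all of $\boldsymbol k$ input packets depart starting in state $s$ with no further arrivals; $\bar T_s^\pi=\mathbb{E}T_s^\pi$,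 $\bar T^\pi_s(\boldsymbol0)=1$; $\bar T_s^*=\inf_\pi\bar T_s^\pi$; $\bar T^*(\boldsymbol k)=\max_s\bar T_s^*(\boldsymbol k)$; $\bar T^*(\boldsymbol r)=\bar T^*(\lceil\boldsymbol r\rceil)$; $\hat T(\boldsymbol r)=\lim_t\bar T^*(t\boldsymbol r)/t$. Epoch-based policy $\pi_\epsilon$: for each $\boldsymbol k,s$ fix $\pi_{\boldsymbol k,s}\in\Pi$ with $\bar T_s^{\pi_{\boldsymbol k,s}}(\boldsymbol k)\le\bar T_s^*(\boldsymbol k)+\epsilon$. Epoch 1 starts at $t_0=0$ in state $s_0$ with $\boldsymbol A(0)$ packets, evacuated by $\pi_{\boldsymbol A(0),s_0}$ (new arrivals are held, not processed), ending at $t_1$. Epoch $m+1$ starts at $t_m$ in state $S_m$ with the $\boldsymbol k_m$ packets that arrived during epoch $m$, evacuated by $\pi_{\boldsymbol k_m,S_m}$, ending at $t_{m+1}$. *)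

theory Defs
  imports "HOL-Probability.Probability"
begin

text \<open>Packet vectors are functions ('n => nat) over a finite
index type 'n of inputs; 's is the finite state set; 'p is a type of policies, with the
admissible class Adm a subset of it.  The evacuation behaviour of policy p started in state s
with the packet vector k (no further arrivals processed) is given by
evac p s k, the joint law of (evacuation time, state at the end of the evacuation).\<close>

type_synonym ('p,'s,'n) evac_law = "'p \<Rightarrow> 's \<Rightarrow> ('n \<Rightarrow> nat) \<Rightarrow> (nat \<times> 's) pmf"

definition Tbar :: "('p,'s,'n) evac_law \<Rightarrow> 'p \<Rightarrow> 's \<Rightarrow> ('n \<Rightarrow> nat) \<Rightarrow> ennreal" where
  "Tbar evac p s k = (\<integral>\<^sup>+ x. ennreal (real (fst x)) \<partial>measure_pmf (evac p s k))"

definition Tstar :: "('p,'s,'n) evac_law \<Rightarrow> 'p set \<Rightarrow> 's \<Rightarrow> ('n \<Rightarrow> nat) \<Rightarrow> ennreal" where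
  "Tstar evac Adm s k = (INF p\<in>Adm. Tbar evac p s k)"

definition Tmax :: "('p,'s,'n) evac_law \<Rightarrow> 'p set \<Rightarrow> ('n \<Rightarrow> nat) \<Rightarrow> ennreal" where
  "Tmax evac Adm k = (SUP s. Tstar evac Adm s k)"

definition Tmax_real :: "('p,'s,'n) evac_law \<Rightarrow> 'p set \<Rightarrow> ('n \<Rightarrow> real) \<Rightarrow> ennreal" where
  "Tmax_real evac Adm r = Tmax evac Adm (\<lambda>i. nat \<lceil>r i\<rceil>)"

primrec arrivals :: "('n \<Rightarrow> nat) pmf \<Rightarrow> nat \<Rightarrow> ('n \<Rightarrow> nat) pmf" where
  "arrivals A 0 = return_pmf (\<lambda>_. 0)"
| "arrivals A (Suc t) = bind_pmf (arrivals A t) (\<lambda>k. map_pmf (\<lambda>a i. k i + a i) A)"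

definition mean_rate :: "('n \<Rightarrow> nat) pmf \<Rightarrow> 'n \<Rightarrow> real" where
  "mean_rate A i = measure_pmf.expectation A (\<lambda>a. real (a i))"

text \<open>Transition kernel of the epoch chain (T_m, S_m) under the epoch-based policy determined
by the choice pol k s = pi_{k,s}: given T_m = tau and S_m = s, the k_m packets that arrived
during epoch m are distributed as the sum of tau arrival vectors, and (T_{m+1}, S_{m+1}) is
the evacuation time / final state of pi_{k_m,s} started in s with k_m packets.\<close>
definition epoch_kernel ::
  "('n \<Rightarrow> nat) pmf \<Rightarrow> ('p,'s,'n) evac_law \<Rightarrow> (('n \<Rightarrow> nat) \<Rightarrow> 's \<Rightarrow> 'p) \<Rightarrow> nat \<times> 's \<Rightarrow> (nat \<times> 's) pmf" where
  "epoch_kernel A evac pol ts =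
     (case ts of (\<tau>, s) \<Rightarrow> bind_pmf (arrivals A \<tau>) (\<lambda>k. evac (pol k s) s k))"

text \<open>Conditional expectation E[T_{m+1} | T_m = tau, S_m = s].\<close>
definition next_epoch_mean ::
  "('n \<Rightarrow> nat) pmf \<Rightarrow> ('p,'s,'n) evac_law \<Rightarrow> (('n \<Rightarrow> nat) \<Rightarrow> 's \<Rightarrow> 'p) \<Rightarrow> nat \<Rightarrow> 's \<Rightarrow> ennreal" where
  "next_epoch_mean A evac pol \<tau> s =
     (\<integral>\<^sup>+ x. ennreal (real (fst x)) \<partial>measure_pmf (epoch_kernel A evac pol (\<tau>, s)))"

end

theory Submission
  imports Defs
begin

primrec samples :: "'a pmf \<Rightarrow> nat \<Rightarrow> 'a list pmf" where
  "samples X 0 = return_pmf []"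
| "samples X (Suc t) = bind_pmf (samples X t) (\<lambda>xs. map_pmf (\<lambda>x. x # xs) X)"

lemma INF_add_bound:
  fixes f :: "'a \<Rightarrow> ennreal"
  assumes "A \<noteq> {}" "\<And>p. p \<in> A \<Longrightarrow> x \<le> f p + c"
  shows "x \<le> (INF p\<in>A. f p) + c"
proof (rule ennreal_le_epsilon)
  fix e :: real assume lt: "(INF p\<in>A. f p) + c < top" and e: "0 < e"
  hence fin: "(INF p\<in>A. f p) < top" by (simp add: top_unique)
  then obtain r where r: "(INF p\<in>A. f p) = ennreal r" "0 \<le> r" by (cases rule: ennreal_cases) auto
  hence "(INF p\<in>A. f p) < (INF p\<in>A. f p) + ennreal e" using e
    by (simp add: ennreal_plus[symmetric] ennreal_less_iff del: ennreal_plus)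
  then obtain p where p: "p \<in> A" "f p < (INF p\<in>A. f p) + ennreal e" by (auto simp: INF_less_iff)
  have "x \<le> f p + c" using assms(2) p by auto
  also have "\<dots> \<le> (INF p\<in>A. f p) + ennreal e + c" using p by (intro add_right_mono) simp
  finally show "x \<le> (INF p\<in>A. f p) + c + ennreal e" by (simp add: ac_simps)
qed

lemma samples_sum_nn:
  fixes h :: "'a \<Rightarrow> real"
  assumes h0: "\<And>x. 0 \<le> h x" and e: "(\<integral>\<^sup>+ x. ennreal (h x) \<partial>measure_pmf X) = ennreal e" and "0 \<le> e"
  shows "(\<integral>\<^sup>+ xs. ennreal (sum_list (map h xs)) \<partial>measure_pmf (samples X t)) = ennreal (real t * e)"
proof (induction t)
  case 0 then show ?case by simp
next
  case (Suc t)
  have nn: "0 \<le> sum_list (map h xs)" for xs by (induction xs) (auto intro: add_nonneg_nonneg h0)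
  have "(\<integral>\<^sup>+ xs. ennreal (sum_list (map h xs)) \<partial>measure_pmf (samples X (Suc t)))
     = \<integral>\<^sup>+ xs. (\<integral>\<^sup>+ x. ennreal (h x) + ennreal (sum_list (map h xs)) \<partial>measure_pmf X) \<partial>measure_pmf (samples X t)"
    using h0 nn by (simp add: nn_integral_bind_pmf nn_integral_map_pmf ennreal_plus)
  also have "\<dots> = \<integral>\<^sup>+ xs. (ennreal e + ennreal (sum_list (map h xs))) \<partial>measure_pmf (samples X t)"
    by (subst nn_integral_add) (auto simp: e measure_pmf.emeasure_space_1)
  also have "\<dots> = ennreal e + ennreal (real t * e)"
    by (subst nn_integral_add) (auto simp: Suc measure_pmf.emeasure_space_1)
  also have "\<dots> = ennreal (real (Suc t) * e)" using \<open>0 \<le> e\<close>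
    by (simp add: ennreal_plus[symmetric] algebra_simps del: ennreal_plus)
  finally show ?case .
qed

lemma samples_sq:
  fixes g :: "'a \<Rightarrow> real"
  assumes gb: "\<And>x. \<bar>g x\<bar> \<le> B" and g0: "measure_pmf.expectation X g = 0"
  shows "(\<integral>\<^sup>+ xs. ennreal ((sum_list (map g xs))\<^sup>2) \<partial>measure_pmf (samples X t))
         = ennreal (real t * measure_pmf.expectation X (\<lambda>x. (g x)\<^sup>2))"
proof (induction t)
  case 0 then show ?case by simp
next
  case (Suc t)
  define V where "V = measure_pmf.expectation X (\<lambda>x. (g x)\<^sup>2)"
  have V0: "0 \<le> V" unfolding V_def by simp
  have ig: "integrable (measure_pmf X) g"
    by (rule measure_pmf.integrable_const_bound[where B=B]) (auto intro!: AE_I2 order.trans[OF gb abs_ge_self] simp: gb)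
  have sq: "(g x)^2 \<le> B^2" for x using power_mono[OF gb[of x] abs_ge_zero, of 2] by simp
  have ig2: "integrable (measure_pmf X) (\<lambda>x. (g x)\<^sup>2)"
    by (rule measure_pmf.integrable_const_bound[where B="B^2"])
       (auto intro!: AE_I2 simp: sq)
  have inner: "(\<integral>\<^sup>+ x. ennreal ((g x + S)\<^sup>2) \<partial>measure_pmf X) = ennreal (S\<^sup>2 + V)" for S
  proof -
    have eq: "(\<lambda>x. (g x + S)\<^sup>2) = (\<lambda>x. (g x)\<^sup>2 + 2 * S * g x + S\<^sup>2)"
      by (auto simp: power2_eq_square algebra_simps)
    have int: "integrable (measure_pmf X) (\<lambda>x. (g x + S)\<^sup>2)"
      unfolding eq using ig ig2 by auto
    have "measure_pmf.expectation X (\<lambda>x. (g x + S)\<^sup>2) = V + 2 * S * 0 + S\<^sup>2"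
      unfolding eq V_def g0[symmetric] using ig ig2 by (simp add: integral_add integral_mult_right)
    then show ?thesis by (subst nn_integral_eq_integral[OF int]) (auto simp: add.commute)
  qed
  have "(\<integral>\<^sup>+ xs. ennreal ((sum_list (map g xs))\<^sup>2) \<partial>measure_pmf (samples X (Suc t)))
     = \<integral>\<^sup>+ xs. ennreal ((sum_list (map g xs))\<^sup>2 + V) \<partial>measure_pmf (samples X t)"
    by (simp add: nn_integral_bind_pmf nn_integral_map_pmf inner)
  also have "\<dots> = \<integral>\<^sup>+ xs. (ennreal ((sum_list (map g xs))\<^sup>2) + ennreal V) \<partial>measure_pmf (samples X t)"
    using V0 by (simp add: ennreal_plus)
  also have "\<dots> = ennreal (real t * V) + ennreal V"
    by (subst nn_integral_add) (auto simp: Suc[folded V_def] measure_pmf.emeasure_space_1)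
  also have "\<dots> = ennreal (real (Suc t) * V)" using V0
    by (simp add: ennreal_plus[symmetric] algebra_simps del: ennreal_plus)
  finally show ?case unfolding V_def .
qed

lemma samples_length: "xs \<in> set_pmf (samples X t) \<Longrightarrow> length xs = t"
  by (induction t arbitrary: xs) auto

lemma nn_split3:
  fixes Q R :: "'b \<Rightarrow> real" and M :: "'b pmf"
  assumes "0 \<le> c1" "0 \<le> c2" "\<And>x. 0 \<le> Q x" "\<And>x. 0 \<le> R x"
  shows "(\<integral>\<^sup>+ x. ennreal (c1 * Q x + R x + c2) \<partial>measure_pmf M)
     = ennreal c1 * (\<integral>\<^sup>+ x. ennreal (Q x) \<partial>measure_pmf M) + (\<integral>\<^sup>+ x. ennreal (R x) \<partial>measure_pmf M) + ennreal c2"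
proof -
  have "(\<integral>\<^sup>+ x. ennreal (c1 * Q x + R x + c2) \<partial>measure_pmf M)
      = (\<integral>\<^sup>+ x. (ennreal c1 * ennreal (Q x) + ennreal (R x)) + ennreal c2 \<partial>measure_pmf M)"
    using assms by (intro nn_integral_cong) (simp add: ennreal_plus ennreal_mult add_nonneg_nonneg)
  also have "\<dots> = (\<integral>\<^sup>+ x. (ennreal c1 * ennreal (Q x) + ennreal (R x)) \<partial>measure_pmf M) + ennreal c2"
    by (subst nn_integral_add) (auto simp: measure_pmf.emeasure_space_1)
  also have "(\<integral>\<^sup>+ x. (ennreal c1 * ennreal (Q x) + ennreal (R x)) \<partial>measure_pmf M)
      = (\<integral>\<^sup>+ x. ennreal c1 * ennreal (Q x) \<partial>measure_pmf M) + (\<integral>\<^sup>+ x. ennreal (R x) \<partial>measure_pmf M)"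
    by (subst nn_integral_add) auto
  also have "(\<integral>\<^sup>+ x. ennreal c1 * ennreal (Q x) \<partial>measure_pmf M) = ennreal c1 * (\<integral>\<^sup>+ x. ennreal (Q x) \<partial>measure_pmf M)"
    by (subst nn_integral_cmult) auto
  finally show ?thesis .
qed

lemma lln:
  fixes f :: "'a \<Rightarrow> real" and X :: "'a pmf"
  assumes f0: "\<And>x. 0 \<le> f x" and fi: "integrable (measure_pmf X) f" and eta: "0 < \<eta>"
  shows "\<exists>B\<ge>0. \<forall>t. (\<integral>\<^sup>+ xs. ennreal \<bar>sum_list (map f xs) - real t * measure_pmf.expectation X f\<bar> \<partial>measure_pmf (samples X t))
            \<le> ennreal (\<eta> * real t + B)"
proof -
  define s where "s = (\<lambda>(M::nat) x. f x - min (f x) (real M))"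
  have smeas: "s M \<in> borel_measurable (measure_pmf X)" for M by simp
  have slim: "(\<lambda>M. measure_pmf.expectation X (s M)) \<longlonglongrightarrow> measure_pmf.expectation X (\<lambda>x. 0)"
  proof (rule integral_dominated_convergence[where w=f])
    show "AE x in measure_pmf X. (\<lambda>M. s M x) \<longlonglongrightarrow> 0"
    proof (rule AE_I2)
      fix x
      have "\<forall>\<^sub>F M in sequentially. s M x = 0"
        unfolding eventually_sequentially
        by (rule exI[of _ "nat \<lceil>f x\<rceil>"]) (auto simp: s_def min_def intro: order.trans[OF real_nat_ceiling_ge])
      then show "(\<lambda>M. s M x) \<longlonglongrightarrow> 0" by (rule tendsto_eventually)
    qed
    show "AE x in measure_pmf X. norm (s M x) \<le> f x" for M
      by (rule AE_I2) (auto simp: s_def f0 min_def)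
  qed (use fi in auto)
  then have "\<forall>\<^sub>F M in sequentially. measure_pmf.expectation X (s M) < \<eta> / 4"
    using eta by (intro order_tendstoD(2)) auto
  then obtain M where M: "measure_pmf.expectation X (s M) < \<eta> / 4"
    by (auto simp: eventually_sequentially)
  define h where "h = s M"
  define e where "e = measure_pmf.expectation X h"
  define \<mu> where "\<mu> = measure_pmf.expectation X f"
  define g where "g = (\<lambda>x. min (f x) (real M) - (\<mu> - e))"
  have h0: "0 \<le> h x" for x by (auto simp: h_def s_def)
  have shall: "0 \<le> sum_list (map h xs)" for xs by (induction xs) (auto intro: add_nonneg_nonneg h0)
  have ih: "integrable (measure_pmf X) h"
    by (rule Bochner_Integration.integrable_bound[OF fi]) (auto simp: h_def s_def f0 min_def)
  have e0: "0 \<le> e" unfolding e_def using h0 by simp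
  have eeta: "e < \<eta> / 4" using M by (simp add: e_def h_def)
  have gf: "g x = f x - h x - (\<mu> - e)" for x by (simp add: g_def h_def s_def)
  have Eg: "measure_pmf.expectation X g = 0"
    unfolding gf using fi ih by (simp add: e_def \<mu>_def measure_pmf.prob_space)
  have gb: "\<bar>g x\<bar> \<le> real M + \<bar>\<mu> - e\<bar>" for x
    using f0[of x] by (auto simp: g_def min_def)
  define V where "V = measure_pmf.expectation X (\<lambda>x. (g x)\<^sup>2)"
  have V0: "0 \<le> V" unfolding V_def by simp
  have hint: "(\<integral>\<^sup>+ x. ennreal (h x) \<partial>measure_pmf X) = ennreal e"
    unfolding e_def by (rule nn_integral_eq_integral[OF ih]) (simp add: h0)
  show ?thesis
  proof (intro exI[of _ "V / \<eta>"] conjI allI)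
    show "0 \<le> V / \<eta>" using V0 eta by simp
    fix t
    show "(\<integral>\<^sup>+ xs. ennreal \<bar>sum_list (map f xs) - real t * measure_pmf.expectation X f\<bar> \<partial>measure_pmf (samples X t))
            \<le> ennreal (\<eta> * real t + V / \<eta>)"
    proof (cases "t = 0")
      case True then show ?thesis using V0 eta by simp
    next
      case False
      define c where "c = \<eta> * real t / 2"
      have c0: "0 < c" using False eta by (simp add: c_def)
      have pw: "ennreal \<bar>sum_list (map f xs) - real t * \<mu>\<bar>
           \<le> ennreal ((1 / (2 * c)) * (sum_list (map g xs))\<^sup>2 + sum_list (map h xs) + (c / 2 + real t * e))"
        if "xs \<in> set_pmf (samples X t)" for xs
      proof -
        have len: "length xs = t" using samples_length[OF that] .
        have sf: "sum_list (map f xs) = sum_list (map g xs) + sum_list (map h xs) + real t * (\<mu> - e)"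
          unfolding len[symmetric] by (induction xs) (auto simp: gf algebra_simps)
        have shn: "0 \<le> sum_list (map h xs)" by (induction xs) (auto intro: add_nonneg_nonneg h0)
        have amgm: "\<bar>y\<bar> \<le> (1 / (2 * c)) * y\<^sup>2 + c / 2" for y
        proof -
          have "0 \<le> (\<bar>y\<bar> - c)\<^sup>2" by simp
          hence "2 * c * \<bar>y\<bar> \<le> y\<^sup>2 + c\<^sup>2" by (simp add: power2_eq_square algebra_simps)
          thus ?thesis using c0 by (simp add: field_simps power2_eq_square)
        qed
        have "\<bar>sum_list (map f xs) - real t * \<mu>\<bar> \<le> \<bar>sum_list (map g xs)\<bar> + sum_list (map h xs) + real t * e"
          proof -
          have et: "0 \<le> real t * e" using e0 by simp
          have "sum_list (map f xs) - real t * \<mu> = sum_list (map g xs) + sum_list (map h xs) - real t * e"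
            unfolding sf by (simp add: algebra_simps)
          then show ?thesis using shn et by (simp split: abs_split)
        qed
        also have "\<dots> \<le> (1 / (2 * c)) * (sum_list (map g xs))\<^sup>2 + c / 2 + sum_list (map h xs) + real t * e"
          using amgm by simp
        finally show ?thesis by (intro ennreal_leI) simp
      qed
      have "(\<integral>\<^sup>+ xs. ennreal \<bar>sum_list (map f xs) - real t * measure_pmf.expectation X f\<bar> \<partial>measure_pmf (samples X t))
          \<le> (\<integral>\<^sup>+ xs. ennreal ((1 / (2 * c)) * (sum_list (map g xs))\<^sup>2 + sum_list (map h xs) + (c / 2 + real t * e)) \<partial>measure_pmf (samples X t))"
        unfolding \<mu>_def[symmetric] by (rule nn_integral_mono_AE, rule AE_pmfI, rule pw)
      also have "\<dots> = ennreal (1 / (2 * c)) * ennreal (real t * V) + ennreal (real t * e) + ennreal (c / 2 + real t * e)"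
        using c0 e0 h0
        by (subst nn_split3) (auto intro: h0 shall simp: samples_sq[OF gb Eg, folded V_def] samples_sum_nn[OF h0 hint e0]
            sum_list_nonneg)
      also have "\<dots> = ennreal (V / \<eta> + c / 2 + 2 * real t * e)"
        using c0 e0 V0 False eta
        by (simp add: ennreal_mult[symmetric] ennreal_plus[symmetric] c_def field_simps del: ennreal_plus)
      also have "\<dots> \<le> ennreal (\<eta> * real t + V / \<eta>)"
      proof (intro ennreal_leI)
        have "real t * e \<le> real t * (\<eta> / 4)" using eeta by (intro mult_left_mono) auto
        then have h1: "real t * e \<le> \<eta> * real t / 4" by (simp add: algebra_simps)
        have h2: "0 \<le> \<eta> * real t" using eta by simp
        show "V / \<eta> + c / 2 + 2 * real t * e \<le> \<eta> * real t + V / \<eta>"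
          unfolding c_def using h1 h2 by linarith
      qed
      finally show ?thesis .
    qed
  qed
qed


lemma Tstar_iter:
  fixes evac :: "('p,'s,'n::finite) evac_law"
  assumes D0: "0 \<le> D0"
    and h: "\<And>s k i. Tstar evac Adm s k \<le> Tstar evac Adm s (k(i := k i + 1)) + ennreal D0"
  shows "Tstar evac Adm s k \<le> Tstar evac Adm s (\<lambda>i. k i + d i) + ennreal (D0 * real (\<Sum>i\<in>UNIV. d i))"
proof (induction "\<Sum>i\<in>UNIV. d i" arbitrary: d)
  case 0
  then have "d = (\<lambda>_. 0)" by (auto simp: fun_eq_iff)
  then show ?case by simp
next
  case (Suc m)
  have "\<exists>j. 0 < d j"
  proof (rule ccontr)
    assume "\<not> ?thesis" then have "\<forall>j. d j = 0" by auto
    then show False using Suc(2) by simp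
  qed
  then obtain j where j: "0 < d j" by blast
  define d' where "d' = d(j := d j - 1)"
  have "(\<Sum>i\<in>UNIV. d i) = d j + (\<Sum>i\<in>UNIV - {j}. d i)" by (simp add: sum.remove)
  moreover have "(\<Sum>i\<in>UNIV. d' i) = d' j + (\<Sum>i\<in>UNIV - {j}. d' i)" by (simp add: sum.remove)
  moreover have "(\<Sum>i\<in>UNIV - {j}. d' i) = (\<Sum>i\<in>UNIV - {j}. d i)"
    by (rule sum.cong) (auto simp: d'_def)
  ultimately have sd: "(\<Sum>i\<in>UNIV. d i) = Suc (\<Sum>i\<in>UNIV. d' i)" using j by (simp add: d'_def)
  then have IH: "Tstar evac Adm s k \<le> Tstar evac Adm s (\<lambda>i. k i + d' i) + ennreal (D0 * real (\<Sum>i\<in>UNIV. d' i))"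
    using Suc(1)[of d'] sd Suc(2) by simp
  have eq: "(\<lambda>i. k i + d' i)(j := k j + d' j + 1) = (\<lambda>i. k i + d i)"
    using j by (auto simp: d'_def fun_eq_iff)
  have st: "Tstar evac Adm s (\<lambda>i. k i + d' i) \<le> Tstar evac Adm s (\<lambda>i. k i + d i) + ennreal D0"
    using h[of s "\<lambda>i. k i + d' i" j] unfolding eq by simp
  have "Tstar evac Adm s k \<le> Tstar evac Adm s (\<lambda>i. k i + d' i) + ennreal (D0 * real (\<Sum>i\<in>UNIV. d' i))" by (rule IH)
  also have "\<dots> \<le> Tstar evac Adm s (\<lambda>i. k i + d i) + ennreal D0 + ennreal (D0 * real (\<Sum>i\<in>UNIV. d' i))"
    by (rule add_right_mono[OF st])
  also have "\<dots> = Tstar evac Adm s (\<lambda>i. k i + d i) + ennreal (D0 * real (\<Sum>i\<in>UNIV. d i))"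
  proof -
    have "ennreal D0 + ennreal (D0 * real (\<Sum>i\<in>UNIV. d' i)) = ennreal (D0 * real (\<Sum>i\<in>UNIV. d i))"
    proof -
      have e1: "D0 * real (\<Sum>i\<in>UNIV. d i) = D0 + D0 * real (\<Sum>i\<in>UNIV. d' i)" 
      proof -
        have "\<And>x::nat. D0 * real (Suc x) = D0 + D0 * real x" by (simp add: algebra_simps)
        then show ?thesis by (simp only: sd)
      qed
      have "ennreal (D0 + D0 * real (\<Sum>i\<in>UNIV. d' i)) = ennreal D0 + ennreal (D0 * real (\<Sum>i\<in>UNIV. d' i))"
        by (intro ennreal_plus D0 mult_nonneg_nonneg of_nat_0_le_iff)
      then show ?thesis by (simp only: e1)
    qed
    then show ?thesis by (simp add: add.assoc)
  qed
  finally show ?case .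
qed

lemma Tstar_add:
  fixes evac :: "('p,'s,'n::finite) evac_law"
  assumes F2F3: "\<And>p q s k l. p \<in> Adm \<Longrightarrow> (\<And>s'. q s' \<in> Adm) \<Longrightarrow>
          \<exists>r\<in>Adm. Tbar evac r s (\<lambda>i. k i + l i)
                  \<le> Tbar evac p s k + (SUP s'. Tbar evac (q s') s' l)"
    and ph: "ph \<in> Adm" and phb: "\<And>s k. Tbar evac ph s k \<le> ennreal (C1 * real (\<Sum>i\<in>UNIV. k i) + C0)"
  shows "Tstar evac Adm s (\<lambda>i. c i + l i) \<le> Tstar evac Adm s c + ennreal (C1 * real (\<Sum>i\<in>UNIV. l i) + C0)"
  unfolding Tstar_def
proof (rule INF_add_bound)
  show "Adm \<noteq> {}" using ph by auto
  fix p assume p: "p \<in> Adm"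
  obtain r where r: "r \<in> Adm" "Tbar evac r s (\<lambda>i. c i + l i) \<le> Tbar evac p s c + (SUP s'. Tbar evac ph s' l)"
    using F2F3[of p "\<lambda>_. ph" s c l] p ph by auto
  have "(INF p\<in>Adm. Tbar evac p s (\<lambda>i. c i + l i)) \<le> Tbar evac r s (\<lambda>i. c i + l i)"
    using r by (auto intro: INF_lower)
  also have "\<dots> \<le> Tbar evac p s c + (SUP s'. Tbar evac ph s' l)" by (rule r)
  also have "\<dots> \<le> Tbar evac p s c + ennreal (C1 * real (\<Sum>i\<in>UNIV. l i) + C0)"
    by (intro add_left_mono SUP_least phb)
  finally show "(INF p\<in>Adm. Tbar evac p s (\<lambda>i. c i + l i)) \<le> Tbar evac p s c + ennreal (C1 * real (\<Sum>i\<in>UNIV. l i) + C0)" .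
qed

lemma arrivals_comp:
  "map_pmf (\<lambda>k. real (k i)) (arrivals A t) = map_pmf (\<lambda>xs. sum_list (map (\<lambda>a. real (a i)) xs)) (samples A t)"
proof (induction t)
  case 0 then show ?case by simp
next
  case (Suc t)
  define N where "N = (\<lambda>y::real. map_pmf (\<lambda>a. y + real (a i)) A)"
  have "map_pmf (\<lambda>k. real (k i)) (arrivals A (Suc t)) = bind_pmf (arrivals A t) (\<lambda>k. N (real (k i)))"
    by (simp add: map_bind_pmf pmf.map_comp o_def N_def)
  also have "\<dots> = bind_pmf (map_pmf (\<lambda>k. real (k i)) (arrivals A t)) N"
    by (simp add: bind_map_pmf)
  also have "\<dots> = bind_pmf (samples A t) (\<lambda>xs. N (sum_list (map (\<lambda>a. real (a i)) xs)))"
    by (simp add: Suc bind_map_pmf)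
  also have "\<dots> = map_pmf (\<lambda>xs. sum_list (map (\<lambda>a. real (a i)) xs)) (samples A (Suc t))"
    by (simp add: map_bind_pmf pmf.map_comp o_def N_def add.commute)
  finally show ?case .
qed

lemma lln_arr:
  fixes A :: "('n \<Rightarrow> nat) pmf"
  assumes "integrable (measure_pmf A) (\<lambda>a. real (a i))" "0 < \<eta>"
  shows "\<exists>B\<ge>0. \<forall>t. (\<integral>\<^sup>+ k. ennreal \<bar>real (k i) - real t * mean_rate A i\<bar> \<partial>measure_pmf (arrivals A t))
            \<le> ennreal (\<eta> * real t + B)"
proof -
  obtain B where B: "B \<ge> 0" "\<And>t. (\<integral>\<^sup>+ xs. ennreal \<bar>sum_list (map (\<lambda>a. real (a i)) xs) - real t * mean_rate A i\<bar> \<partial>measure_pmf (samples A t))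
            \<le> ennreal (\<eta> * real t + B)"
    using lln[of "\<lambda>a. real (a i)" A \<eta>] assms unfolding mean_rate_def by auto
  have "(\<integral>\<^sup>+ k. ennreal \<bar>real (k i) - real t * mean_rate A i\<bar> \<partial>measure_pmf (arrivals A t))
     = (\<integral>\<^sup>+ xs. ennreal \<bar>sum_list (map (\<lambda>a. real (a i)) xs) - real t * mean_rate A i\<bar> \<partial>measure_pmf (samples A t))" for t
  proof -
    have "(\<integral>\<^sup>+ k. ennreal \<bar>real (k i) - real t * mean_rate A i\<bar> \<partial>measure_pmf (arrivals A t))
       = (\<integral>\<^sup>+ y. ennreal \<bar>y - real t * mean_rate A i\<bar> \<partial>measure_pmf (map_pmf (\<lambda>k. real (k i)) (arrivals A t)))"
      by (simp add: nn_integral_map_pmf)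
    also have "\<dots> = (\<integral>\<^sup>+ xs. ennreal \<bar>sum_list (map (\<lambda>a. real (a i)) xs) - real t * mean_rate A i\<bar> \<partial>measure_pmf (samples A t))"
      by (simp add: arrivals_comp nn_integral_map_pmf)
    finally show ?thesis .
  qed
  then show ?thesis using B by auto
qed


lemma Tmax_fin:
  fixes evac :: "('p,'s::finite,'n) evac_law"
  assumes "\<And>s k. Tstar evac Adm s k < \<top>"
  shows "Tmax evac Adm c < \<top>"
proof -
  have "Tmax evac Adm c = Max (range (\<lambda>s. Tstar evac Adm s c))"
    unfolding Tmax_def by (rule cSup_eq_Max) auto
  also have "\<dots> \<in> range (\<lambda>s. Tstar evac Adm s c)" by (rule Max_in) auto
  finally show ?thesis using assms by auto
qed

lemma pointwise:
  fixes evac :: "('p,'s::finite,'n::finite) evac_law"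
  assumes F2F3: "\<And>p q s k l. p \<in> Adm \<Longrightarrow> (\<And>s'. q s' \<in> Adm) \<Longrightarrow>
          \<exists>r\<in>Adm. Tbar evac r s (\<lambda>i. k i + l i)
                  \<le> Tbar evac p s k + (SUP s'. Tbar evac (q s') s' l)"
    and ph: "ph \<in> Adm" and phb: "\<And>s k. Tbar evac ph s k \<le> ennreal (C1 * real (\<Sum>i\<in>UNIV. k i) + C0)"
    and C0: "0 \<le> C0" and C1: "0 \<le> C1" and D0: "0 \<le> D0"
    and h6: "\<And>s k i. Tstar evac Adm s k \<le> Tstar evac Adm s (k(i := k i + 1)) + ennreal D0"
    and fin: "Tmax evac Adm c < \<top>"
    and cb1: "\<And>i. x i \<le> real (c i)" and cb2: "\<And>i. real (c i) \<le> x i + 1"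
  shows "Tstar evac Adm s k \<le> ennreal (enn2real (Tmax evac Adm c) + C0 + D0 * real CARD('n)
            + (C1 + D0) * (\<Sum>i\<in>UNIV. \<bar>real (k i) - x i\<bar>))"
proof -
  define d where "d = (\<lambda>i. c i - k i)"
  define l where "l = (\<lambda>i. k i - c i)"
  define T where "T = enn2real (Tmax evac Adm c)"
  have T0: "0 \<le> T" unfolding T_def by simp
  have kd: "(\<lambda>i. k i + d i) = (\<lambda>i. c i + l i)" by (auto simp: d_def l_def fun_eq_iff)
  have TT: "Tstar evac Adm s c \<le> ennreal T"
  proof -
    have "Tstar evac Adm s c \<le> Tmax evac Adm c" unfolding Tmax_def by (rule SUP_upper) auto
    also have "\<dots> = ennreal T" unfolding T_def using fin by simp
    finally show ?thesis .
  qed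
  have "Tstar evac Adm s k \<le> Tstar evac Adm s (\<lambda>i. k i + d i) + ennreal (D0 * real (\<Sum>i\<in>UNIV. d i))"
    by (rule Tstar_iter[OF D0 h6])
  also have "\<dots> = Tstar evac Adm s (\<lambda>i. c i + l i) + ennreal (D0 * real (\<Sum>i\<in>UNIV. d i))"
    by (simp only: kd)
  also have "\<dots> \<le> Tstar evac Adm s c + ennreal (C1 * real (\<Sum>i\<in>UNIV. l i) + C0) + ennreal (D0 * real (\<Sum>i\<in>UNIV. d i))"
    by (intro add_right_mono Tstar_add[OF F2F3 ph phb]) auto
  also have "\<dots> \<le> ennreal T + ennreal (C1 * real (\<Sum>i\<in>UNIV. l i) + C0) + ennreal (D0 * real (\<Sum>i\<in>UNIV. d i))"
    by (intro add_right_mono TT)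
  also have "ennreal T + ennreal (C1 * real (\<Sum>i\<in>UNIV. l i) + C0) + ennreal (D0 * real (\<Sum>i\<in>UNIV. d i))
      = ennreal (T + (C1 * real (\<Sum>i\<in>UNIV. l i) + C0) + D0 * real (\<Sum>i\<in>UNIV. d i))"
  proof -
    have n1: "0 \<le> C1 * real (\<Sum>i\<in>UNIV. l i) + C0" using C0 C1 by (intro add_nonneg_nonneg mult_nonneg_nonneg of_nat_0_le_iff)
    have n2: "0 \<le> D0 * real (\<Sum>i\<in>UNIV. d i)" using D0 by (intro mult_nonneg_nonneg of_nat_0_le_iff)
    show ?thesis
      by (simp only: ennreal_plus[OF add_nonneg_nonneg[OF T0 n1] n2, symmetric] ennreal_plus[OF T0 n1, symmetric])
  qed
  also have "\<dots> \<le> ennreal (T + C0 + D0 * real CARD('n) + (C1 + D0) * (\<Sum>i\<in>UNIV. \<bar>real (k i) - x i\<bar>))"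
  proof (rule ennreal_leI)
    have l1: "real (l i) \<le> \<bar>real (k i) - x i\<bar>" for i
      using cb1[of i] by (cases "c i \<le> k i") (auto simp: l_def of_nat_diff)
    have d1: "real (d i) \<le> \<bar>real (k i) - x i\<bar> + 1" for i
      using cb2[of i] by (cases "k i \<le> c i") (auto simp: d_def of_nat_diff)
    have "real (\<Sum>i\<in>UNIV. l i) \<le> (\<Sum>i\<in>UNIV. \<bar>real (k i) - x i\<bar>)"
      unfolding of_nat_sum by (rule sum_mono) (rule l1)
    hence a: "C1 * real (\<Sum>i\<in>UNIV. l i) \<le> C1 * (\<Sum>i\<in>UNIV. \<bar>real (k i) - x i\<bar>)"
      using C1 by (rule mult_left_mono)
    have "real (\<Sum>i\<in>UNIV. d i) \<le> (\<Sum>i\<in>UNIV. \<bar>real (k i) - x i\<bar> + 1)"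
      unfolding of_nat_sum by (rule sum_mono) (rule d1)
    also have "\<dots> = (\<Sum>i\<in>UNIV. \<bar>real (k i) - x i\<bar>) + real CARD('n)"
      by (simp add: sum.distrib)
    finally have b: "D0 * real (\<Sum>i\<in>UNIV. d i) \<le> D0 * ((\<Sum>i\<in>UNIV. \<bar>real (k i) - x i\<bar>) + real CARD('n))"
      using D0 by (rule mult_left_mono)
    show "T + (C1 * real (\<Sum>i\<in>UNIV. l i) + C0) + D0 * real (\<Sum>i\<in>UNIV. d i)
        \<le> T + C0 + D0 * real CARD('n) + (C1 + D0) * (\<Sum>i\<in>UNIV. \<bar>real (k i) - x i\<bar>)"
      using a b by (simp add: algebra_simps)
  qed
  finally show ?thesis unfolding T_def .
qed

theorem mainTheorem6:
  fixes A :: "('n::finite \<Rightarrow> nat) pmf"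
    and evac :: "('p,'s::finite,'n) evac_law"
    and Adm :: "'p set"
    and pol :: "('n \<Rightarrow> nat) \<Rightarrow> 's \<Rightarrow> 'p"
    and \<epsilon> L :: real
  assumes convention0: "\<And>p s. p \<in> Adm \<Longrightarrow> Tbar evac p s (\<lambda>_. 0) = 1"
    and F2F3: "\<And>p q s k l. p \<in> Adm \<Longrightarrow> (\<And>s'. q s' \<in> Adm) \<Longrightarrow>
          \<exists>r\<in>Adm. Tbar evac r s (\<lambda>i. k i + l i)
                  \<le> Tbar evac p s k + (SUP s'. Tbar evac (q s') s' l)"
    and SA1: "\<And>s k. Tstar evac Adm s k < \<top>"
    and SA5: "\<exists>ph\<in>Adm. \<exists>C0 C1. 0 \<le> C0 \<and> 0 \<le> C1 \<and>
          (\<forall>s k. Tbar evac ph s k \<le> ennreal (C1 * real (\<Sum>i\<in>UNIV. k i) + C0))"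
    and SA6: "\<exists>D0. \<forall>s k i. Tstar evac Adm s k \<le> Tstar evac Adm s (k(i := k i + 1)) + ennreal D0"
    and arr_mean: "\<And>i. integrable (measure_pmf A) (\<lambda>a. real (a i))"
    and pol_in: "\<And>k s. pol k s \<in> Adm"
    and pol_eps: "\<And>k s. Tbar evac (pol k s) s k \<le> Tstar evac Adm s k + ennreal \<epsilon>"
    and hatT: "(\<lambda>t::nat. enn2real (Tmax_real evac Adm (\<lambda>i. real t * mean_rate A i)) / real t)
                 \<longlonglongrightarrow> L"
    and hatT_lt1: "L < 1"
    and eps_pos: "0 < \<epsilon>"
    and eps_lt: "\<epsilon> < 1 - L"
  shows "\<exists>U>0. \<exists>\<delta>. 0 < \<delta> \<and> \<delta> \<le> 1 \<and>
           (\<forall>\<tau> s. 1 \<le> \<tau> \<longrightarrow>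
              next_epoch_mean A evac pol \<tau> s \<le> ennreal (U + (1 - \<delta>) * real \<tau>)) \<and>
           (\<forall>\<delta>1>0. finite {(\<tau>, s::'s). 1 \<le> \<tau> \<and> U / real \<tau> > \<delta>1})"
  proof -
  obtain ph C0 C1 where ph: "ph \<in> Adm" and C0: "0 \<le> C0" and C1: "0 \<le> C1"
    and phb: "\<And>s k. Tbar evac ph s k \<le> ennreal (C1 * real (\<Sum>i\<in>UNIV. k i) + C0)"
    using SA5 by blast
  obtain D0' where D0': "\<And>s k i. Tstar evac Adm s k \<le> Tstar evac Adm s (k(i := k i + 1)) + ennreal D0'"
    using SA6 by blast
  define D0 where "D0 = max 0 D0'"
  have D0: "0 \<le> D0" unfolding D0_def by simp
  have h6: "Tstar evac Adm s k \<le> Tstar evac Adm s (k(i := k i + 1)) + ennreal D0" for s k i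
    using D0' [of s k i] order_trans add_left_mono ennreal_leI[of D0' D0] unfolding D0_def by fastforce
  define lam where "lam = mean_rate A"
  have lam0: "0 \<le> lam i" for i unfolding lam_def mean_rate_def by simp
  define c where "c = (\<lambda>t::nat. \<lambda>i. nat \<lceil>real t * lam i\<rceil>)"
  have cb1: "real t * lam i \<le> real (c t i)" for t i unfolding c_def by (rule real_nat_ceiling_ge)
  have cb2: "real (c t i) \<le> real t * lam i + 1" for t i
  proof -
    have "0 \<le> real t * lam i" using lam0 by simp
    then show ?thesis unfolding c_def by (simp add: of_nat_nat)
  qed
  define T where "T = (\<lambda>t. enn2real (Tmax evac Adm (c t)))"
  have fin: "Tmax evac Adm (c t) < \<top>" for t by (rule Tmax_fin[OF SA1])
  have T0: "0 \<le> T t" for t unfolding T_def by simp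
  have L0: "0 \<le> L"
    by (rule LIMSEQ_le_const[OF hatT]) auto
  define nC where "nC = real CARD('n)"
  define K where "K = C1 + D0"
  have K0: "0 \<le> K" using C1 D0 by (simp add: K_def)
  have nC0: "0 \<le> nC" by (simp add: nC_def)
  define \<eta> where "\<eta> = (1 - L) / (2 * (1 + K * nC))"
  have pos: "0 < 1 + K * nC" using K0 nC0 by (simp add: add_pos_nonneg)
  have eta: "0 < \<eta>" unfolding \<eta>_def using hatT_lt1 pos by simp
  have etaK: "\<eta> * (1 + K * nC) = (1 - L) / 2" unfolding \<eta>_def using pos by (simp add: field_simps)
  have "\<forall>\<^sub>F t in sequentially. enn2real (Tmax_real evac Adm (\<lambda>i. real t * mean_rate A i)) / real t < L + \<eta>"
    using eta by (intro order_tendstoD(2)[OF hatT]) auto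
  then obtain N where N: "\<And>t. N \<le> t \<Longrightarrow> T t / real t < L + \<eta>"
    unfolding eventually_sequentially T_def Tmax_real_def c_def lam_def by blast
  define S0 where "S0 = (\<Sum>t<Suc N. T t)"
  have S00: "0 \<le> S0" unfolding S0_def using T0 by (simp add: sum_nonneg)
  have Tb: "T t \<le> S0 + (L + \<eta>) * real t" for t
  proof (cases "t \<le> N")
    case True
    have "T t \<le> S0" unfolding S0_def
      by (rule member_le_sum) (use True T0 in auto)
    moreover have "0 \<le> (L + \<eta>) * real t" using L0 eta by simp
    ultimately show ?thesis by linarith
  next
    case False
    then have tp: "0 < real t" by simp
    have "T t / real t < L + \<eta>" using N False by simp
    then have "T t < (L + \<eta>) * real t" using tp by (simp add: pos_divide_less_eq)
    then show ?thesis using S00 by linarith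
  qed
  have "\<forall>i. \<exists>B\<ge>0. \<forall>t. (\<integral>\<^sup>+ k. ennreal \<bar>real (k i) - real t * mean_rate A i\<bar> \<partial>measure_pmf (arrivals A t))
            \<le> ennreal (\<eta> * real t + B)"
    using lln_arr[OF arr_mean eta] by blast
  then obtain B where B0: "\<And>i. 0 \<le> B i"
    and Bb: "\<And>i t. (\<integral>\<^sup>+ k. ennreal \<bar>real (k i) - real t * lam i\<bar> \<partial>measure_pmf (arrivals A t))
            \<le> ennreal (\<eta> * real t + B i)"
    unfolding lam_def by metis
  define BB where "BB = (\<Sum>i\<in>UNIV. B i)"
  have BB0: "0 \<le> BB" unfolding BB_def using B0 by (simp add: sum_nonneg)
  define \<delta> where "\<delta> = (1 - L) / 2"
  define U where "U = S0 + C0 + D0 * nC + \<epsilon> + K * BB + 1"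
  have U0: "0 < U" unfolding U_def using S00 C0 eps_pos mult_nonneg_nonneg[OF D0 nC0] mult_nonneg_nonneg[OF K0 BB0] by linarith
  have dd: "0 < \<delta>" "\<delta> \<le> 1" unfolding \<delta>_def using hatT_lt1 L0 by auto
  have main: "next_epoch_mean A evac pol \<tau> s \<le> ennreal (U + (1 - \<delta>) * real \<tau>)" for \<tau> s
  proof -
    define Q where "Q = (\<lambda>k::'n \<Rightarrow> nat. \<Sum>i\<in>UNIV. \<bar>real (k i) - real \<tau> * lam i\<bar>)"
    define c2 where "c2 = T \<tau> + C0 + D0 * nC + \<epsilon>"
    have c20: "0 \<le> c2" unfolding c2_def using T0 C0 D0 nC0 eps_pos by simp
    have Q0: "0 \<le> Q k" for k unfolding Q_def by (simp add: sum_nonneg)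
    have "next_epoch_mean A evac pol \<tau> s = (\<integral>\<^sup>+ k. Tbar evac (pol k s) s k \<partial>measure_pmf (arrivals A \<tau>))"
      by (simp add: next_epoch_mean_def epoch_kernel_def nn_integral_bind_pmf Tbar_def)
    also have "\<dots> \<le> (\<integral>\<^sup>+ k. ennreal (K * Q k + 0 + c2) \<partial>measure_pmf (arrivals A \<tau>))"
    proof (rule nn_integral_mono)
      fix k
      have pw: "Tstar evac Adm s k \<le> ennreal (T \<tau> + C0 + D0 * nC + K * Q k)"
        using pointwise[OF F2F3 ph phb C0 C1 D0 h6 fin[of \<tau>] cb1[of \<tau>] cb2[of \<tau>], where s=s and k=k]
        unfolding T_def nC_def K_def Q_def by simp
      have "Tbar evac (pol k s) s k \<le> Tstar evac Adm s k + ennreal \<epsilon>" by (rule pol_eps)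
      also have "\<dots> \<le> ennreal (T \<tau> + C0 + D0 * nC + K * Q k) + ennreal \<epsilon>" by (intro add_right_mono pw)
      also have "\<dots> = ennreal (K * Q k + 0 + c2)"
        using T0 C0 D0 nC0 K0 Q0 eps_pos unfolding c2_def
        by (subst ennreal_plus[symmetric]) (auto simp: algebra_simps)
      finally show "Tbar evac (pol k s) s k \<le> ennreal (K * Q k + 0 + c2)" .
    qed
    also have "\<dots> = ennreal K * (\<integral>\<^sup>+ k. ennreal (Q k) \<partial>measure_pmf (arrivals A \<tau>)) + (\<integral>\<^sup>+ k. ennreal 0 \<partial>measure_pmf (arrivals A \<tau>)) + ennreal c2"
      by (rule nn_split3) (use K0 c20 Q0 in auto)
    also have "(\<integral>\<^sup>+ k. ennreal (Q k) \<partial>measure_pmf (arrivals A \<tau>))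
        = (\<Sum>i\<in>UNIV. \<integral>\<^sup>+ k. ennreal \<bar>real (k i) - real \<tau> * lam i\<bar> \<partial>measure_pmf (arrivals A \<tau>))"
      unfolding Q_def
    proof -
      have "(\<integral>\<^sup>+ k. ennreal (\<Sum>i\<in>UNIV. \<bar>real (k i) - real \<tau> * lam i\<bar>) \<partial>measure_pmf (arrivals A \<tau>))
          = (\<integral>\<^sup>+ k. (\<Sum>i\<in>UNIV. ennreal \<bar>real (k i) - real \<tau> * lam i\<bar>) \<partial>measure_pmf (arrivals A \<tau>))"
        by (intro nn_integral_cong) (simp add: sum_ennreal)
      also have "\<dots> = (\<Sum>i\<in>UNIV. \<integral>\<^sup>+ k. ennreal \<bar>real (k i) - real \<tau> * lam i\<bar> \<partial>measure_pmf (arrivals A \<tau>))"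
        by (rule nn_integral_sum) auto
      finally show "(\<integral>\<^sup>+ k. ennreal (\<Sum>i\<in>UNIV. \<bar>real (k i) - real \<tau> * lam i\<bar>) \<partial>measure_pmf (arrivals A \<tau>))
          = (\<Sum>i\<in>UNIV. \<integral>\<^sup>+ k. ennreal \<bar>real (k i) - real \<tau> * lam i\<bar> \<partial>measure_pmf (arrivals A \<tau>))" .
    qed
    also have "\<dots> \<le> (\<Sum>i\<in>UNIV. ennreal (\<eta> * real \<tau> + B i))"
      by (intro sum_mono Bb)
    also have "\<dots> = ennreal (nC * \<eta> * real \<tau> + BB)"
      using eta B0 by (subst sum_ennreal) (auto simp: BB_def nC_def sum.distrib mult.assoc)
    finally have "next_epoch_mean A evac pol \<tau> s \<le> ennreal K * ennreal (nC * \<eta> * real \<tau> + BB) + 0 + ennreal c2"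
      by (simp add: mult_left_mono add_right_mono)
    also have "\<dots> = ennreal (K * (nC * \<eta> * real \<tau> + BB) + c2)"
      using K0 nC0 eta BB0 c20 by (simp add: ennreal_mult ennreal_plus)
    also have "\<dots> \<le> ennreal (U + (1 - \<delta>) * real \<tau>)"
    proof (rule ennreal_leI)
      have "K * (nC * \<eta> * real \<tau>) + (L + \<eta>) * real \<tau> = (L + \<eta> * (1 + K * nC)) * real \<tau>"
        by (simp add: algebra_simps)
      also have "\<dots> = (1 - \<delta>) * real \<tau>" unfolding etaK \<delta>_def by (simp add: algebra_simps)
      finally have e: "K * (nC * \<eta> * real \<tau>) + (L + \<eta>) * real \<tau> = (1 - \<delta>) * real \<tau>" .
      show "K * (nC * \<eta> * real \<tau> + BB) + c2 \<le> U + (1 - \<delta>) * real \<tau>"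
        using Tb[of \<tau>] e unfolding U_def c2_def by (simp add: algebra_simps)
    qed
    finally show "next_epoch_mean A evac pol \<tau> s \<le> ennreal (U + (1 - \<delta>) * real \<tau>)" .
  qed
  have finp: "finite {(\<tau>, s::'s). 1 \<le> \<tau> \<and> U / real \<tau> > \<delta>1}" if d1: "0 < \<delta>1" for \<delta>1
  proof -
    have "{(\<tau>, s::'s). 1 \<le> \<tau> \<and> U / real \<tau> > \<delta>1} \<subseteq> {..nat \<lceil>U / \<delta>1\<rceil>} \<times> UNIV"
    proof
      fix p assume "p \<in> {(\<tau>, s::'s). 1 \<le> \<tau> \<and> U / real \<tau> > \<delta>1}"
      then obtain \<tau> s where p: "p = (\<tau>, s)" "1 \<le> \<tau>" "\<delta>1 < U / real \<tau>" by auto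
      then have "\<delta>1 * real \<tau> < U" by (simp add: pos_less_divide_eq)
      then have "real \<tau> < U / \<delta>1" using d1 by (simp add: pos_less_divide_eq mult.commute)
      then have "\<tau> \<le> nat \<lceil>U / \<delta>1\<rceil>" by linarith
      then show "p \<in> {..nat \<lceil>U / \<delta>1\<rceil>} \<times> UNIV" using p by auto
    qed
    then show "finite {(\<tau>, s::'s). 1 \<le> \<tau> \<and> U / real \<tau> > \<delta>1}"
      by (rule finite_subset) auto
  qed
  show ?thesis using U0 dd main finp by blast
qed

end
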